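(* Let $X$ be a topological space and let $\mathcal{A}(X)\subset C(X)$ be a family with the $D$-property. Assume that the activation function $\sigma:\mathbb{R}\to\mathbb{R}$ satisfies the univariate universal approximation property. Let $m\ge 1$. Then for every compact set $K\subset X$, every $g\in C(K;\mathbb{R}^m)$ and every $\varepsilon>0$ there exists $H\in\mathcal{N}_1^{(m)}(\sigma)$ with $\sup_{x\in K}\|g(x)-H(x)\|_{\mathbb{R}^m}<\varepsilon$. Consequently, for every $l\ge1$, the class $\mathcal{N}_l^{(m)}(\sigma)$ is dense in $C(X;\mathbb{R}^m)$ (i.e. for every compact $K\subset X$, the restrictions to $K$ of elements of $\mathcal{N}_l^{(m)}(\sigma)$ are dense in $C(K;\mathbb{R}^m)$ with respect to the uniform norm on $K$).
   Context: $C(X)$ denotes the continuous real-valued functions on $X$, and $C(X;\mathbb{R}^m)$ the continuous maps $X\to\mathbb{R}^m$, topologized by uniform convergence on compact sets (seminorms $\|g\|_K=\sup_{x\in K}\|g(x)\|_{\mathbb{R}^m}$, $K$ compact, Euclidean norm). A family $\mathcal{A}(X)\subset C(X)$ (the "basic family" of admissible feature maps) has the $D$-property if for every compact $K\subset X$, every $g\in C(K)$ and every $\varepsilon>0$ there exist $M\in\mathbb{N}$, $f_1,\dots,f_M\in\mathcal{A}(X)$ and $u_1,\dots,u_M\in C(\mathbb{R})$ with $\max_{x\in K}|g(x)-\sum_{i=1}^M u_i(f_i(x))|<\varepsilon$. An activation $\sigma:\mathbb{R}\to\mathbb{R}$ satisfies the univariate universal approximation property if for every compact interval $[a,b]$,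 every $u\in C([a,b])$ and every $\varepsilon>0$ there are $N$ and $c_j,w_j,\theta_j\in\mathbb{R}$ with $\sup_{t\in[a,b]}|u(t)-\sum_{j=1}^N c_j\sigma(w_jt-\theta_j)|<\varepsilon$. For $l\ge1$, $m\ge1$, $\mathcal{N}_l^{(m)}(\sigma)$ (deep topological feedforward neural networks of depth $l$ with $m$ outputs, built from $\mathcal{A}(X)$) is the set of all maps $H:X\to\mathbb{R}^m$ of the form $H=T_{l+1}\circ\sigma\circ T_l\circ\sigma\circ\cdots\circ T_1\circ\sigma\circ T_0$, where $T_0(x)=(w_1f_1(x)-\theta_1,\dots,w_{k_0}f_{k_0}(x)-\theta_{k_0})$ with $f_i\in\mathcal{A}(X)$, $w_i,\theta_i\in\mathbb{R}$; $T_j(y)=A_jy-b_j$ are affine maps $\mathbb{R}^{k_{j-1}}\to\mathbb{R}^{k_j}$ for $j=1,\dots,l$; $T_{l+1}(y)=A_{l+1}y-b_{l+1}$ is an affine map $\mathbb{R}^{k_l}\to\mathbb{R}^m$; and $\sigma$ acts componentwise. For $l=1$ this is the same as maps $H(x)=A\sigma(T(x))-b$ with $T(x)=(w_1f_1(x)-\theta_1,\dots,w_rf_r(x)-\theta_r)$, $f_i\in\mathcal{A}(X)$, $A\in\mathbb{R}^{m\times r}$, $b\in\mathbb{R}^m$ (single hidden layer networks, since intermediate affine layers may be taken trivial). *)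

theory Defs
  imports "HOL-Analysis.Analysis"
begin

text \<open>The space X is the (whole) type 'a of class topological_space.
  Finite-dimensional hidden vectors of width k are represented as functions
  nat => real of which only the components i < k are used.
  A supremum condition "sup over S of h < eps" is written as
  "there is d < eps with h x <= d for all x in S".\<close>

definition D_property :: "('a::topological_space \<Rightarrow> real) set \<Rightarrow> bool" where
  "D_property \<A> \<longleftrightarrow>
     (\<forall>K g \<epsilon>. compact K \<and> continuous_on K g \<and> \<epsilon> > (0::real) \<longrightarrow>
        (\<exists>M::nat. \<exists>f u. (\<forall>i<M. f i \<in> \<A> \<and> continuous_on UNIV (u i :: real \<Rightarrow> real)) \<and>
           (\<exists>\<delta><\<epsilon>. \<forall>x\<in>K. \<bar>g x - (\<Sum>i<M. u i (f i x))\<bar> \<le> \<delta>)))"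

definition univariate_UAP :: "(real \<Rightarrow> real) \<Rightarrow> bool" where
  "univariate_UAP \<sigma> \<longleftrightarrow>
     (\<forall>a b u \<epsilon>. continuous_on {a..b} u \<and> \<epsilon> > (0::real) \<longrightarrow>
        (\<exists>N::nat. \<exists>c w \<theta>.
           \<exists>\<delta><\<epsilon>. \<forall>t\<in>{a..b}. \<bar>u t - (\<Sum>j<N. c j * \<sigma> (w j * t - \<theta> j))\<bar> \<le> \<delta>))"

text \<open>Hidden layers: hid j is the vector after the (j+1)-th application of sigma.
  hid 0 = sigma(z) with z = T_0(x); hid (j+1) = sigma(A_{j+1} (hid j) - b_{j+1}),
  where A_{j+1} maps R^{ks j} to R^{ks (j+1)}.\<close>

primrec hid :: "(real \<Rightarrow> real) \<Rightarrow> (nat \<Rightarrow> nat) \<Rightarrow> (nat \<Rightarrow> nat \<Rightarrow> nat \<Rightarrow> real)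
     \<Rightarrow> (nat \<Rightarrow> nat \<Rightarrow> real) \<Rightarrow> (nat \<Rightarrow> real) \<Rightarrow> nat \<Rightarrow> nat \<Rightarrow> real" where
  "hid \<sigma> ks As bs z 0 = (\<lambda>i. \<sigma> (z i))"
| "hid \<sigma> ks As bs z (Suc j) =
     (\<lambda>i. \<sigma> ((\<Sum>p<ks j. As (Suc j) i p * hid \<sigma> ks As bs z j p) - bs (Suc j) i))"

text \<open>Deep networks with l hidden layers (l applications of sigma), widths
  ks 0, ..., ks (l-1), and m outputs (m = CARD('m) >= 1). For l = 1 these are
  exactly the maps x |-> A sigma(T(x)) - b.\<close>

definition NN :: "('a::topological_space \<Rightarrow> real) set \<Rightarrow> (real \<Rightarrow> real) \<Rightarrow> nat
     \<Rightarrow> ('a \<Rightarrow> real ^ 'm::finite) set" where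
  "NN \<A> \<sigma> l = {H. \<exists>ks f w \<theta> As bs Aout bout.
      (\<forall>i<ks 0. f i \<in> \<A>) \<and>
      H = (\<lambda>x. (\<chi> r. (\<Sum>p<ks (l - 1).
                 Aout r p * hid \<sigma> ks As bs (\<lambda>i. w i * f i x - \<theta> i) (l - 1) p))
               - bout)}"

end

theory Submission
  imports Defs
begin

lemma sum_split_nat: "(\<Sum>p<k1+(k2::nat). G p) = (\<Sum>p<k1. G p) + (\<Sum>p<k2. (G (k1+p)::real))"
  by (induction k2) (auto simp: add.assoc)

lemma sum_divmod: "(\<Sum>q<n*N. F q) = (\<Sum>a<(n::nat). \<Sum>j<N. (F (a*N+j)::real))"
proof (induction n)
  case 0 then show ?case by simp
next
  case (Suc n)
  have "(\<Sum>q<Suc n*N. F q) = (\<Sum>q<n*N + N. F q)" by (simp add: add.commute)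
  also have "\<dots> = (\<Sum>q<n*N. F q) + (\<Sum>j<N. F (n*N+j))" by (rule sum_split_nat)
  finally show ?case using Suc by simp
qed

lemma sum_divmod_sel:
  assumes "a < n"
  shows "(\<Sum>q<n*N. if q div N = a then G (q mod N) else 0) = (\<Sum>j<(N::nat). (G j::real))"
proof (cases "N = 0")
  case True then show ?thesis by simp
next
  case False
  have "(\<Sum>q<n*N. if q div N = a then G (q mod N) else 0)
      = (\<Sum>a'<n. \<Sum>j<N. if (a'*N+j) div N = a then G ((a'*N+j) mod N) else 0)"
    by (rule sum_divmod)
  also have "\<dots> = (\<Sum>a'<n. if a' = a then (\<Sum>j<N. G j) else 0)"
  proof (rule sum.cong[OF refl])
    fix a' assume "a' \<in> {..<n}"
    have "\<And>j. j < N \<Longrightarrow> (a'*N+j) div N = a' \<and> (a'*N+j) mod N = j"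
      using False by auto
    then show "(\<Sum>j<N. if (a'*N+j) div N = a then G ((a'*N+j) mod N) else 0)
        = (if a' = a then (\<Sum>j<N. G j) else 0)"
      by (auto intro!: sum.neutral sum.cong)
  qed
  also have "\<dots> = (\<Sum>j<N. G j)" using assms by (simp add: sum.delta)
  finally show ?thesis .
qed


lemma NN1_unfold:
  "NN \<A> \<sigma> 1 = {H. \<exists>(k::nat) f w \<theta> Aout bout. (\<forall>i<k. f i \<in> \<A>) \<and>
      H = (\<lambda>x. (\<chi> r. (\<Sum>p<k. Aout r p * \<sigma> (w p * f p x - \<theta> p))) - bout)}"
  unfolding NN_def
proof (intro Collect_cong iffI)
  fix H :: "'a \<Rightarrow> real ^ 'm"
  assume "\<exists>ks f w \<theta> As bs Aout bout. (\<forall>i<ks 0. f i \<in> \<A>) \<and>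
      H = (\<lambda>x. (\<chi> r. (\<Sum>p<ks (1 - 1). Aout r p * hid \<sigma> ks As bs (\<lambda>i. w i * f i x - \<theta> i) (1 - 1) p)) - bout)"
  then obtain ks f w \<theta> As bs Aout bout where "(\<forall>i<ks 0. f i \<in> \<A>)" and
     "H = (\<lambda>x. (\<chi> r. (\<Sum>p<ks (1 - 1). Aout r p * hid \<sigma> ks As bs (\<lambda>i. w i * f i x - \<theta> i) (1 - 1) p)) - bout)"
    by blast
  then show "\<exists>(k::nat) f w \<theta> Aout bout. (\<forall>i<k. f i \<in> \<A>) \<and>
      H = (\<lambda>x. (\<chi> r. (\<Sum>p<k. Aout r p * \<sigma> (w p * f p x - \<theta> p))) - bout)"
    by (intro exI[of _ "ks 0"] exI[of _ f] exI[of _ w] exI[of _ \<theta>] exI[of _ Aout] exI[of _ bout]) simp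
next
  fix H :: "'a \<Rightarrow> real ^ 'm"
  assume "\<exists>(k::nat) f w \<theta> Aout bout. (\<forall>i<k. f i \<in> \<A>) \<and>
      H = (\<lambda>x. (\<chi> r. (\<Sum>p<k. Aout r p * \<sigma> (w p * f p x - \<theta> p))) - bout)"
  then obtain k f w \<theta> Aout bout where "(\<forall>i<(k::nat). f i \<in> \<A>)" and
      "H = (\<lambda>x. (\<chi> r. (\<Sum>p<k. Aout r p * \<sigma> (w p * f p x - \<theta> p))) - bout)" by blast
  then show "\<exists>ks f w \<theta> As bs Aout bout. (\<forall>i<ks 0. f i \<in> \<A>) \<and>
      H = (\<lambda>x. (\<chi> r. (\<Sum>p<ks (1 - 1). Aout r p * hid \<sigma> ks As bs (\<lambda>i. w i * f i x - \<theta> i) (1 - 1) p)) - bout)"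
    by (intro exI[of _ "\<lambda>_. k"] exI[of _ f] exI[of _ w] exI[of _ \<theta>] exI exI exI[of _ Aout] exI[of _ bout]) simp
qed

lemma NN1_zero: "(\<lambda>x. 0) \<in> NN \<A> \<sigma> 1"
  unfolding NN1_unfold
  by (intro CollectI exI[of _ "0::nat"] exI[of _ "\<lambda>_. 0"] exI[of _ "\<lambda>_. 0"] exI[of _ "\<lambda>_. 0"] exI[of _ "\<lambda>_ _. 0"] exI[of _ 0]) (simp add: vec_eq_iff fun_eq_iff)

lemma NN1_single:
  assumes "f \<in> \<A>"
  shows "(\<lambda>x. (c * \<sigma> (w * f x - \<theta>)) *\<^sub>R v) \<in> NN \<A> \<sigma> 1"
  unfolding NN1_unfold
  using assms
  by (intro CollectI exI[of _ 1] exI[of _ "\<lambda>_. f"] exI[of _ "\<lambda>_. w"] exI[of _ "\<lambda>_. \<theta>"]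
      exI[of _ "\<lambda>r p. c * v $ r"] exI[of _ 0]) (auto simp: vec_eq_iff)

lemma NN1_add:
  assumes "H1 \<in> NN \<A> \<sigma> 1" "H2 \<in> NN \<A> \<sigma> 1"
  shows "(\<lambda>x. H1 x + H2 x) \<in> NN \<A> \<sigma> 1"
proof -
  obtain k1 f1 w1 \<theta>1 A1 b1 where h1: "\<forall>i<(k1::nat). f1 i \<in> \<A>"
    "H1 = (\<lambda>x. (\<chi> r. (\<Sum>p<k1. A1 r p * \<sigma> (w1 p * f1 p x - \<theta>1 p))) - b1)"
    using assms(1) unfolding NN1_unfold by blast
  obtain k2 f2 w2 \<theta>2 A2 b2 where h2: "\<forall>i<(k2::nat). f2 i \<in> \<A>"
    "H2 = (\<lambda>x. (\<chi> r. (\<Sum>p<k2. A2 r p * \<sigma> (w2 p * f2 p x - \<theta>2 p))) - b2)"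
    using assms(2) unfolding NN1_unfold by blast
  define cat :: "(nat \<Rightarrow> real) \<Rightarrow> (nat \<Rightarrow> real) \<Rightarrow> nat \<Rightarrow> real"
    where "cat a b p = (if p < k1 then a p else b (p - k1))" for a b p
  define catf :: "(nat \<Rightarrow> 'a \<Rightarrow> real) \<Rightarrow> (nat \<Rightarrow> 'a \<Rightarrow> real) \<Rightarrow> nat \<Rightarrow> 'a \<Rightarrow> real"
    where "catf a b p = (if p < k1 then a p else b (p - k1))" for a b p
  have "(\<lambda>x. H1 x + H2 x) = (\<lambda>x. (\<chi> r. (\<Sum>p<k1+k2. cat (A1 r) (A2 r) p *
      \<sigma> (cat w1 w2 p * catf f1 f2 p x - cat \<theta>1 \<theta>2 p))) - (b1 + b2))"
    unfolding h1 h2 by (auto simp: vec_eq_iff sum_split_nat cat_def catf_def intro!: sum.cong)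
  moreover have "\<forall>i<k1+k2. catf f1 f2 i \<in> \<A>" using h1 h2 by (auto simp: cat_def catf_def)
  ultimately show ?thesis unfolding NN1_unfold
    by (intro CollectI exI[of _ "k1+k2"] exI[of _ "catf f1 f2"] exI[of _ "cat w1 w2"]
        exI[of _ "cat \<theta>1 \<theta>2"] exI[of _ "\<lambda>r. cat (A1 r) (A2 r)"] exI[of _ "b1+b2"] conjI)
qed


inductive_set SN :: "('a \<Rightarrow> real) set \<Rightarrow> (real \<Rightarrow> real) \<Rightarrow> ('a \<Rightarrow> real) set"
  for \<A> :: "('a \<Rightarrow> real) set" and \<sigma> :: "real \<Rightarrow> real" where
  SN_zero: "(\<lambda>x. 0) \<in> SN \<A> \<sigma>"
| SN_single: "f \<in> \<A> \<Longrightarrow> (\<lambda>x. c * \<sigma> (w * f x - \<theta>)) \<in> SN \<A> \<sigma>"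
| SN_add: "g \<in> SN \<A> \<sigma> \<Longrightarrow> h \<in> SN \<A> \<sigma> \<Longrightarrow> (\<lambda>x. g x + h x) \<in> SN \<A> \<sigma>"

lemma SN_sum:
  assumes "finite I" "\<forall>j\<in>I. F j \<in> SN \<A> \<sigma>"
  shows "(\<lambda>x. \<Sum>j\<in>I. F j x) \<in> SN \<A> \<sigma>"
  using assms
proof (induction I rule: finite_induct)
  case empty then show ?case by (simp add: SN_zero)
next
  case (insert a I)
  then have "(\<lambda>x. F a x + (\<Sum>j\<in>I. F j x)) \<in> SN \<A> \<sigma>"
    by (intro SN_add) auto
  then show ?case using insert by simp
qed

lemma SN_NN1:
  assumes "g \<in> SN \<A> \<sigma>"
  shows "(\<lambda>x. g x *\<^sub>R v) \<in> NN \<A> \<sigma> 1"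
  using assms
proof (induction rule: SN.induct)
  case SN_zero then show ?case using NN1_zero by simp
next
  case (SN_single f c w \<theta>) then show ?case by (rule NN1_single)
next
  case (SN_add g h)
  then show ?case using NN1_add[OF SN_add.IH] by (simp add: scaleR_add_left)
qed

lemma NN1_sum:
  assumes "finite I" "\<forall>j\<in>I. F j \<in> NN \<A> \<sigma> 1"
  shows "(\<lambda>x. \<Sum>j\<in>I. F j x) \<in> NN \<A> \<sigma> 1"
  using assms
proof (induction I rule: finite_induct)
  case empty show ?case unfolding sum.empty by (rule NN1_zero)
next
  case (insert a I)
  then have "(\<lambda>x. F a x + (\<Sum>j\<in>I. F j x)) \<in> NN \<A> \<sigma> 1"
    by (intro NN1_add) auto
  then show ?case using insert by simp
qed

lemma scalar_approx:
  fixes \<A> :: "('a::topological_space \<Rightarrow> real) set"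
  assumes A: "\<forall>f\<in>\<A>. continuous_on UNIV f" and D: "D_property \<A>" and U: "univariate_UAP \<sigma>"
    and K: "compact K" and h: "continuous_on K h" and eps: "\<epsilon> > 0"
  shows "\<exists>S\<in>SN \<A> \<sigma>. \<exists>\<delta><\<epsilon>. \<forall>x\<in>K. \<bar>h x - S x\<bar> \<le> \<delta>"
proof -
  have "compact K \<and> continuous_on K h \<and> \<epsilon>/2 > 0" using K h eps by simp
  then have "\<exists>M::nat. \<exists>f u. (\<forall>i<M. f i \<in> \<A> \<and> continuous_on UNIV (u i :: real \<Rightarrow> real)) \<and>
           (\<exists>\<delta><\<epsilon>/2. \<forall>x\<in>K. \<bar>h x - (\<Sum>i<M. u i (f i x))\<bar> \<le> \<delta>)"
    using D unfolding D_property_def by blast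
  then obtain M f u \<delta> where fu: "\<forall>i<(M::nat). f i \<in> \<A> \<and> continuous_on UNIV (u i :: real \<Rightarrow> real)"
    and dl: "\<delta> < \<epsilon>/2" and hb: "\<forall>x\<in>K. \<bar>h x - (\<Sum>i<M. u i (f i x))\<bar> \<le> \<delta>"
    by blast
  define e where "e = \<epsilon> / (2 * (real M + 1))"
  have e0: "e > 0" using eps by (simp add: e_def)
  have "\<forall>i\<in>{..<M}. \<exists>Sd. fst Sd \<in> SN \<A> \<sigma> \<and> snd Sd < e \<and>
          (\<forall>x\<in>K. \<bar>u i (f i x) - fst Sd x\<bar> \<le> snd Sd)"
  proof
    fix i assume "i \<in> {..<M}"
    then have fi: "f i \<in> \<A>" and ui: "continuous_on UNIV (u i)" using fu by auto
    have "continuous_on K (f i)" using A fi continuous_on_subset by blast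
    then have "compact (f i ` K)" using K compact_continuous_image by blast
    then obtain B where B: "\<forall>y\<in>f i ` K. norm y \<le> B" using compact_imp_bounded[of "f i ` K"] unfolding bounded_iff by blast
    have "continuous_on {-B..B} (u i)" using ui continuous_on_subset by blast
    then obtain N c w \<theta> d where d: "d < e"
      and app: "\<forall>t\<in>{-B..B}. \<bar>u i t - (\<Sum>j<(N::nat). c j * \<sigma> (w j * t - \<theta> j))\<bar> \<le> d"
      using U e0 unfolding univariate_UAP_def by blast
    have "(\<lambda>x. \<Sum>j\<in>{..<N}. (\<lambda>j x. c j * \<sigma> (w j * f i x - \<theta> j)) j x) \<in> SN \<A> \<sigma>"
      by (rule SN_sum) (auto intro: SN_single fi)
    moreover have "\<forall>x\<in>K. \<bar>u i (f i x) - (\<Sum>j<N. c j * \<sigma> (w j * f i x - \<theta> j))\<bar> \<le> d"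
    proof
      fix x assume "x \<in> K"
      then have "f i x \<in> {-B..B}" using B by (auto simp: abs_le_iff)
      then show "\<bar>u i (f i x) - (\<Sum>j<N. c j * \<sigma> (w j * f i x - \<theta> j))\<bar> \<le> d" using app by blast
    qed
    ultimately show "\<exists>Sd. fst Sd \<in> SN \<A> \<sigma> \<and> snd Sd < e \<and>
          (\<forall>x\<in>K. \<bar>u i (f i x) - fst Sd x\<bar> \<le> snd Sd)"
      using d by (intro exI[of _ "(\<lambda>x. \<Sum>j<N. c j * \<sigma> (w j * f i x - \<theta> j), d)"]) auto
  qed
  from bchoice[OF this] obtain G where G: "\<forall>i\<in>{..<M}. fst (G i) \<in> SN \<A> \<sigma> \<and> snd (G i) < e \<and>
          (\<forall>x\<in>K. \<bar>u i (f i x) - fst (G i) x\<bar> \<le> snd (G i))"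
    by (elim exE) (rule that)
  define S where "S = (\<lambda>x. \<Sum>i\<in>{..<M}. fst (G i) x)"
  have S: "S \<in> SN \<A> \<sigma>" unfolding S_def using G by (intro SN_sum) auto
  have "(\<Sum>i<M. snd (G i)) \<le> (\<Sum>i<M. e)"
    by (rule sum_mono) (use G in force)
  then have sumd: "(\<Sum>i<M. snd (G i)) \<le> real M * e" by simp
  have "real M * e = (\<epsilon>/2) * (real M / (real M + 1))" by (simp add: e_def)
  also have "\<dots> < (\<epsilon>/2) * 1" using eps by (intro mult_strict_left_mono) auto
  finally have Me: "real M * e < \<epsilon>/2" by simp
  have "\<forall>x\<in>K. \<bar>h x - S x\<bar> \<le> \<delta> + (\<Sum>i<M. snd (G i))"
  proof
    fix x assume x: "x \<in> K"
    have e1: "h x - S x = (h x - (\<Sum>i<M. u i (f i x))) + ((\<Sum>i<M. u i (f i x)) - S x)" by simp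
    have t1: "\<bar>h x - S x\<bar> \<le> \<bar>h x - (\<Sum>i<M. u i (f i x))\<bar> + \<bar>(\<Sum>i<M. u i (f i x)) - S x\<bar>"
      by (subst e1) (rule abs_triangle_ineq)
    have "\<bar>(\<Sum>i<M. u i (f i x)) - S x\<bar> = \<bar>\<Sum>i<M. (u i (f i x) - fst (G i) x)\<bar>"
      by (simp add: S_def sum_subtractf)
    also have "\<dots> \<le> (\<Sum>i<M. \<bar>u i (f i x) - fst (G i) x\<bar>)" by (rule sum_abs)
    also have "\<dots> \<le> (\<Sum>i<M. snd (G i))" using G x by (intro sum_mono) auto
    finally have t2: "\<bar>(\<Sum>i<M. u i (f i x)) - S x\<bar> \<le> (\<Sum>i<M. snd (G i))" .
    have t3: "\<bar>h x - (\<Sum>i<M. u i (f i x))\<bar> \<le> \<delta>" using hb x by blast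
    show "\<bar>h x - S x\<bar> \<le> \<delta> + (\<Sum>i<M. snd (G i))" using t1 t2 t3 by linarith
  qed
  moreover have "\<delta> + (\<Sum>i<M. snd (G i)) < \<epsilon>" using dl sumd Me by linarith
  ultimately show ?thesis using S by blast
qed


lemma NN_step:
  fixes H :: "'a::topological_space \<Rightarrow> real ^ 'm::finite" and N :: nat
  assumes HN: "H \<in> NN \<A> \<sigma> l" and l: "l \<ge> 1"
  shows "(\<lambda>x. \<chi> r. \<Sum>j<N. c j * \<sigma> (\<alpha> j * H x $ r - \<beta> j)) \<in> NN \<A> \<sigma> (Suc l)"
proof -
  obtain ks f w \<theta> As bs Aout bout where hf: "\<forall>i<ks 0. f i \<in> \<A>" and
    hH: "H = (\<lambda>x. (\<chi> r. (\<Sum>p<ks (l - 1).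
                 Aout r p * hid \<sigma> ks As bs (\<lambda>i. w i * f i x - \<theta> i) (l - 1) p)) - bout)"
    using HN unfolding NN_def by blast
  define n where "n = CARD('m)"
  have bij: "bij_betw (to_nat_on (UNIV::'m set)) UNIV {..<n}"
    unfolding n_def using to_nat_on_finite[of "UNIV::'m set"] by simp
  define e where "e = to_nat_on (UNIV::'m set)"
  define e' where "e' = inv_into UNIV e"
  have ee: "\<And>r. e' (e r) = r" unfolding e'_def e_def
    using bij bij_betw_inv_into_left by fastforce
  have en: "\<And>r. e r < n" unfolding e_def using bij bij_betwE by blast
  define ks' where "ks' = ks(l := n * N)"
  define As' where "As' = As(l := (\<lambda>i p. \<alpha> (i mod N) * Aout (e' (i div N)) p))"
  define bs' where "bs' = bs(l := (\<lambda>i. \<alpha> (i mod N) * bout $ e' (i div N) + \<beta> (i mod N)))"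
  define Aout' :: "'m \<Rightarrow> nat \<Rightarrow> real" where "Aout' = (\<lambda>r q. if q div N = e r then c (q mod N) else 0)"
  have same: "j < l \<longrightarrow> hid \<sigma> ks' As' bs' z j = hid \<sigma> ks As bs z j" for z j
  proof (induction j)
    case 0 then show ?case by simp
  next
    case (Suc j)
    then show ?case by (simp add: ks'_def As'_def bs'_def)
  qed
  have lS: "l = Suc (l - 1)" using l by simp
  have kl: "ks' l = n * N" by (simp add: ks'_def)
  have hidl: "hid \<sigma> ks' As' bs' z l = (\<lambda>i. \<sigma> (\<alpha> (i mod N) *
      ((\<Sum>p<ks (l - 1). Aout (e' (i div N)) p * hid \<sigma> ks As bs z (l - 1) p) - bout $ e' (i div N))
      - \<beta> (i mod N)))" for z
  proof -
    have a: "hid \<sigma> ks' As' bs' z (l - 1) = hid \<sigma> ks As bs z (l - 1)" using same l by simp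
    have "l - 1 \<noteq> l" using l by simp
    then have b: "ks' (l - 1) = ks (l - 1)" by (simp add: ks'_def)
    have "hid \<sigma> ks' As' bs' z l = hid \<sigma> ks' As' bs' z (Suc (l - 1))" using lS by simp
    also have "\<dots> = (\<lambda>i. \<sigma> ((\<Sum>p<ks' (l - 1). As' (Suc (l - 1)) i p * hid \<sigma> ks' As' bs' z (l - 1) p)
        - bs' (Suc (l - 1)) i))" by simp
    also have "\<dots> = (\<lambda>i. \<sigma> ((\<Sum>p<ks (l - 1). \<alpha> (i mod N) * Aout (e' (i div N)) p * hid \<sigma> ks As bs z (l - 1) p)
        - (\<alpha> (i mod N) * bout $ e' (i div N) + \<beta> (i mod N))))"
      unfolding a b using lS[symmetric] by (simp add: As'_def bs'_def)
    also have "\<dots> = (\<lambda>i. \<sigma> (\<alpha> (i mod N) *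
      ((\<Sum>p<ks (l - 1). Aout (e' (i div N)) p * hid \<sigma> ks As bs z (l - 1) p) - bout $ e' (i div N))
      - \<beta> (i mod N)))"
      by (simp add: sum_distrib_left right_diff_distrib mult.assoc diff_diff_eq)
    finally show ?thesis .
  qed
  have Hc: "H x $ r = (\<Sum>p<ks (l - 1). Aout r p * hid \<sigma> ks As bs (\<lambda>i. w i * f i x - \<theta> i) (l - 1) p) - bout $ r"
    for x r unfolding hH by simp
  have eq: "(\<lambda>x. \<chi> r. \<Sum>j<N. c j * \<sigma> (\<alpha> j * H x $ r - \<beta> j)) =
      (\<lambda>x. (\<chi> r. (\<Sum>p<ks' (Suc l - 1).
                 Aout' r p * hid \<sigma> ks' As' bs' (\<lambda>i. w i * f i x - \<theta> i) (Suc l - 1) p)) - 0)"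
  proof (rule ext, simp only: vec_eq_iff, intro allI)
    fix x r
    have "(\<Sum>p<ks' (Suc l - 1). Aout' r p * hid \<sigma> ks' As' bs' (\<lambda>i. w i * f i x - \<theta> i) (Suc l - 1) p)
        = (\<Sum>q<n * N. if q div N = e r then c (q mod N) * \<sigma> (\<alpha> (q mod N) * H x $ r - \<beta> (q mod N)) else 0)"
      using kl by (auto simp: hidl Aout'_def Hc ee intro!: sum.cong)
    also have "\<dots> = (\<Sum>j<N. c j * \<sigma> (\<alpha> j * H x $ r - \<beta> j))"
      by (rule sum_divmod_sel[OF en])
    finally show "(\<chi> r. \<Sum>j<N. c j * \<sigma> (\<alpha> j * H x $ r - \<beta> j)) $ r =
      ((\<chi> r. (\<Sum>p<ks' (Suc l - 1).
                 Aout' r p * hid \<sigma> ks' As' bs' (\<lambda>i. w i * f i x - \<theta> i) (Suc l - 1) p)) - 0) $ r"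
      by simp
  qed
  have "\<forall>i<ks' 0. f i \<in> \<A>" using hf l by (simp add: ks'_def)
  then show ?thesis unfolding eq NN_def by blast
qed


theorem theorem2p1:
  fixes \<A> :: "('a::topological_space \<Rightarrow> real) set"
    and \<sigma> :: "real \<Rightarrow> real"
  assumes "\<forall>f\<in>\<A>. continuous_on UNIV f"
    and "D_property \<A>"
    and "univariate_UAP \<sigma>"
  shows "(\<forall>K (g :: 'a \<Rightarrow> real ^ 'm::finite) \<epsilon>.
            compact K \<and> continuous_on K g \<and> \<epsilon> > 0 \<longrightarrow>
            (\<exists>H\<in>NN \<A> \<sigma> 1. \<exists>\<delta><\<epsilon>. \<forall>x\<in>K. norm (g x - H x) \<le> \<delta>))
       \<and> (\<forall>l\<ge>1. \<forall>K (g :: 'a \<Rightarrow> real ^ 'm) \<epsilon>.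
            compact K \<and> continuous_on K g \<and> \<epsilon> > 0 \<longrightarrow>
            (\<exists>H\<in>NN \<A> \<sigma> l. \<exists>\<delta><\<epsilon>. \<forall>x\<in>K. norm (g x - H x) \<le> \<delta>))"
proof -
  define P where "P l \<longleftrightarrow> (\<forall>K (g :: 'a \<Rightarrow> real ^ 'm) \<epsilon>.
            compact K \<and> continuous_on K g \<and> \<epsilon> > 0 \<longrightarrow>
            (\<exists>H\<in>NN \<A> \<sigma> l. \<exists>\<delta><\<epsilon>. \<forall>x\<in>K. norm (g x - H x) \<le> \<delta>))" for l
  define n where "n = CARD('m)"
  have n0: "n > 0" unfolding n_def by simp
  have P1: "P 1" unfolding P_def
  proof (intro allI impI, elim conjE)
    fix K and g :: "'a \<Rightarrow> real ^ 'm" and \<epsilon> :: real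
    assume K: "compact K" and g: "continuous_on K g" and eps: "\<epsilon> > 0"
    have en: "\<epsilon> / n > 0" using eps n0 by simp
    have "\<forall>r. \<exists>Sd. fst Sd \<in> SN \<A> \<sigma> \<and> snd Sd < \<epsilon> / n \<and> (\<forall>x\<in>K. \<bar>g x $ r - fst Sd x\<bar> \<le> snd Sd)"
    proof
      fix r
      have "continuous_on K (\<lambda>x. g x $ r)" using g by (intro continuous_intros)
      then obtain S d where "S \<in> SN \<A> \<sigma>" "d < \<epsilon> / n" "\<forall>x\<in>K. \<bar>g x $ r - S x\<bar> \<le> d"
        using scalar_approx[OF assms K _ en] by blast
      then show "\<exists>Sd. fst Sd \<in> SN \<A> \<sigma> \<and> snd Sd < \<epsilon> / n \<and> (\<forall>x\<in>K. \<bar>g x $ r - fst Sd x\<bar> \<le> snd Sd)"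
        by (intro exI[of _ "(S, d)"]) simp
    qed
    from choice[OF this] obtain G where G: "\<forall>r. fst (G r) \<in> SN \<A> \<sigma> \<and> snd (G r) < \<epsilon> / n \<and>
        (\<forall>x\<in>K. \<bar>g x $ r - fst (G r) x\<bar> \<le> snd (G r))"
      by (elim exE) (rule that)
    define H where "H = (\<lambda>x. \<Sum>r\<in>UNIV. fst (G r) x *\<^sub>R (axis r 1 :: real ^ 'm))"
    have HN: "H \<in> NN \<A> \<sigma> 1" unfolding H_def
    proof (rule NN1_sum)
      show "\<forall>j\<in>UNIV. (\<lambda>x. fst (G j) x *\<^sub>R (axis j 1 :: real ^ 'm)) \<in> NN \<A> \<sigma> 1"
        using G by (intro ballI SN_NN1) blast
    qed simp
    have Hc: "H x $ r = fst (G r) x" for x r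
      unfolding H_def by (simp add: sum_component axis_def mult.commute[of _ "if _ then _ else _"] if_distrib sum.delta' cong: if_cong)
    have "\<forall>x\<in>K. norm (g x - H x) \<le> (\<Sum>r\<in>UNIV. snd (G r))"
    proof
      fix x assume x: "x \<in> K"
      have "norm (g x - H x) \<le> (\<Sum>r\<in>UNIV. \<bar>(g x - H x) $ r\<bar>)" by (rule norm_le_l1_cart)
      also have "\<dots> \<le> (\<Sum>r\<in>UNIV. snd (G r))"
        using G x by (intro sum_mono) (simp add: Hc)
      finally show "norm (g x - H x) \<le> (\<Sum>r\<in>UNIV. snd (G r))" .
    qed
    moreover have "(\<Sum>r\<in>UNIV. snd (G r)) < (\<Sum>r\<in>(UNIV::'m set). \<epsilon> / n)"
      using G by (intro sum_strict_mono) auto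
    moreover have "(\<Sum>r\<in>(UNIV::'m set). \<epsilon> / n) = \<epsilon>" using n0 by (simp add: n_def)
    ultimately show "\<exists>H\<in>NN \<A> \<sigma> 1. \<exists>\<delta><\<epsilon>. \<forall>x\<in>K. norm (g x - H x) \<le> \<delta>"
      using HN by auto
  qed
  have step: "P (Suc l)" if l: "1 \<le> l" and IH: "P l" for l
    unfolding P_def
  proof (intro allI impI, elim conjE)
    fix K and g :: "'a \<Rightarrow> real ^ 'm" and \<epsilon> :: real
    assume K: "compact K" and g: "continuous_on K g" and eps: "\<epsilon> > 0"
    obtain H \<delta>0 where HN: "H \<in> NN \<A> \<sigma> l" and d0: "\<delta>0 < \<epsilon>/2"
      and Hb: "\<forall>x\<in>K. norm (g x - H x) \<le> \<delta>0"
      using IH K g eps unfolding P_def by (metis half_gt_zero)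
    have "compact (g ` K)" using K g compact_continuous_image by blast
    then obtain Gb where Gb: "\<forall>y\<in>g ` K. norm y \<le> Gb"
      using compact_imp_bounded[of "g ` K"] unfolding bounded_iff by blast
    define B where "B = Gb + \<epsilon>/2"
    have HB: "H x $ r \<in> {-B..B}" if x: "x \<in> K" for x r
    proof -
      have "\<bar>H x $ r\<bar> \<le> norm (H x)" by (rule component_le_norm_cart)
      also have "norm (H x) \<le> norm (g x) + norm (g x - H x)"
        using norm_triangle_ineq4[of "g x" "g x - H x"] by simp
      finally have "\<bar>H x $ r\<bar> \<le> norm (g x) + norm (g x - H x)" .
      moreover have "norm (g x) \<le> Gb" using Gb x by blast
      moreover have "norm (g x - H x) \<le> \<delta>0" using Hb x by blast
      ultimately show ?thesis using d0 by (simp add: B_def abs_le_iff)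
    qed
    have e2: "\<epsilon> / (2 * n) > 0" using eps n0 by simp
    have "continuous_on {-B..B} (\<lambda>t::real. t)" by (intro continuous_intros)
    then obtain N c \<alpha> \<beta> d where dd: "d < \<epsilon> / (2 * n)"
      and app: "\<forall>t\<in>{-B..B}. \<bar>t - (\<Sum>j<(N::nat). c j * \<sigma> (\<alpha> j * t - \<beta> j))\<bar> \<le> d"
      using assms(3) e2 unfolding univariate_UAP_def by blast
    define H' where "H' = (\<lambda>x. \<chi> r. \<Sum>j<N. c j * \<sigma> (\<alpha> j * H x $ r - \<beta> j))"
    have H'N: "H' \<in> NN \<A> \<sigma> (Suc l)" unfolding H'_def by (rule NN_step[OF HN l])
    have "\<forall>x\<in>K. norm (g x - H' x) \<le> \<delta>0 + n * d"
    proof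
      fix x assume x: "x \<in> K"
      have "norm (H x - H' x) \<le> (\<Sum>r\<in>UNIV. \<bar>(H x - H' x) $ r\<bar>)" by (rule norm_le_l1_cart)
      also have "\<dots> \<le> (\<Sum>r\<in>(UNIV::'m set). d)"
        using app HB[OF x] by (intro sum_mono) (simp add: H'_def)
      also have "\<dots> = n * d" by (simp add: n_def)
      finally have a: "norm (H x - H' x) \<le> n * d" .
      have "norm (g x - H' x) \<le> norm (g x - H x) + norm (H x - H' x)"
        by (rule norm_diff_triangle_le[where y="H x"]) simp_all
      then show "norm (g x - H' x) \<le> \<delta>0 + n * d" using a Hb x by fastforce
    qed
    moreover have "n * d < n * (\<epsilon> / (2 * n))" using dd n0 by (intro mult_strict_left_mono) auto
    moreover have "n * (\<epsilon> / (2 * n)) = \<epsilon>/2" using n0 by simp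
    ultimately show "\<exists>H\<in>NN \<A> \<sigma> (Suc l). \<exists>\<delta><\<epsilon>. \<forall>x\<in>K. norm (g x - H x) \<le> \<delta>"
      using H'N d0 by (intro bexI[of _ H'] exI[of _ "\<delta>0 + n * d"]) auto
  qed
  have all: "\<forall>l\<ge>1. P l"
  proof (intro allI impI)
    fix l :: nat assume "1 \<le> l"
    then show "P l"
    proof (induction l rule: nat_induct_at_least)
      case base then show ?case by (rule P1)
    next
      case (Suc l) then show ?case using step by blast
    qed
  qed
  show ?thesis using P1 all unfolding P_def by blast
qed

end
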